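(* Let $\mathfrak{g}$ be a finite-dimensional complex Lie algebra, let $I$ be an ideal of $\mathfrak{g}$ such that $\mathfrak{g}/I$ is abelian, and let $\mathfrak{z}=Z(I)$ be the center of $I$. Then every $1$-cocycle $f\in Z^1(\mathfrak{g}/I,\mathfrak{z})$ defines an associative nil-inner CPA-structure on $\mathfrak{g}$ by $x\cdot y=[f(\overline{x}),y]$ for all $x,y\in\mathfrak{g}$, where $\overline{x}$ denotes the image of $x$ in $\mathfrak{g}/I$.
   Context: $\mathfrak{z}$ is an ideal of $\mathfrak{g}$ and $\mathfrak{g}/I$ acts on $\mathfrak{z}$ by $\overline{x}\circ z=[x,z]$. $Z^1(\mathfrak{g}/I,\mathfrak{z})$ is the space of linear maps $f:\mathfrak{g}/I\to\mathfrak{z}$ with $f([\overline{x},\overline{y}])=\overline{x}\circ f(\overline{y})-\overline{y}\circ f(\overline{x})$. A CPA-structure on $\mathfrak{g}$ is a bilinear product $x\cdot y$ satisfying, for all $x,y,z$: $x\cdot y=y\cdot x$; $[x,y]\cdot z=x\cdot(y\cdot z)-y\cdot(x\cdot z)$; $x\cdot[y,z]=[x\cdot y,z]+[y,x\cdot z]$. It is nil-inner if $x\cdot y=[\phi(x),y]$ for some nilpotent Lie algebra homomorphism $\phi:\mathfrak{g}\to\mathfrak{g}$; associative means $(x\cdot y)\cdot z=x\cdot(y\cdot z)$. *)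

theory Defs
  imports Complex_Main
begin

text \<open>A complex vector space is a type 'a with an abstract scalar multiplication
  sc :: complex => 'a => 'a satisfying the vector space axioms; the Lie algebra g is
  the whole type 'a, with bracket br.\<close>

definition fin_dim :: "(complex \<Rightarrow> 'a::ab_group_add \<Rightarrow> 'a) \<Rightarrow> bool" where
  "fin_dim sc \<longleftrightarrow> (\<exists>B. finite B \<and> module.span sc B = UNIV)"

definition bilinear_map ::
  "(complex \<Rightarrow> 'a::ab_group_add \<Rightarrow> 'a) \<Rightarrow> ('a \<Rightarrow> 'a \<Rightarrow> 'a) \<Rightarrow> bool" where
  "bilinear_map sc p \<longleftrightarrow>
     (\<forall>x. Vector_Spaces.linear sc sc (p x)) \<and> (\<forall>y. Vector_Spaces.linear sc sc (\<lambda>x. p x y))"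

definition lie_algebra :: "(complex \<Rightarrow> 'a::ab_group_add \<Rightarrow> 'a) \<Rightarrow> ('a \<Rightarrow> 'a \<Rightarrow> 'a) \<Rightarrow> bool" where
  "lie_algebra sc br \<longleftrightarrow> vector_space sc \<and> bilinear_map sc br \<and>
     (\<forall>x. br x x = 0) \<and>
     (\<forall>x y z. br x (br y z) + br y (br z x) + br z (br x y) = 0)"

definition lie_ideal :: "(complex \<Rightarrow> 'a::ab_group_add \<Rightarrow> 'a) \<Rightarrow> ('a \<Rightarrow> 'a \<Rightarrow> 'a) \<Rightarrow> 'a set \<Rightarrow> bool" where
  "lie_ideal sc br I \<longleftrightarrow> module.subspace sc I \<and> (\<forall>x i. i \<in> I \<longrightarrow> br x i \<in> I)"

text \<open>The coset x + I, i.e. the image of x in g/I.\<close>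
definition coset :: "'a set \<Rightarrow> 'a::ab_group_add \<Rightarrow> 'a set" where
  "coset I x = (\<lambda>i. x + i) ` I"

text \<open>g/I abelian: [xbar, ybar] = [x,y] + I is the zero coset 0 + I.\<close>
definition abelian_quotient :: "('a \<Rightarrow> 'a \<Rightarrow> 'a) \<Rightarrow> 'a::ab_group_add set \<Rightarrow> bool" where
  "abelian_quotient br I \<longleftrightarrow> (\<forall>x y. coset I (br x y) = coset I 0)"

definition center_of :: "('a \<Rightarrow> 'a \<Rightarrow> 'a) \<Rightarrow> 'a::ab_group_add set \<Rightarrow> 'a set" where
  "center_of br I = {z \<in> I. \<forall>i\<in>I. br i z = 0}"

text \<open>Z^1(g/I, z): linear maps f : g/I -> z (given on cosets) with
  f([xbar,ybar]) = xbar o f(ybar) - ybar o f(xbar), where xbar o z = [x,z]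
  and [xbar,ybar] = [x,y] + I, xbar + ybar = (x+y) + I, c xbar = (c x) + I.\<close>
definition cocycle1 ::
  "(complex \<Rightarrow> 'a::ab_group_add \<Rightarrow> 'a) \<Rightarrow> ('a \<Rightarrow> 'a \<Rightarrow> 'a) \<Rightarrow> 'a set \<Rightarrow> 'a set \<Rightarrow> ('a set \<Rightarrow> 'a) \<Rightarrow> bool" where
  "cocycle1 sc br I Z f \<longleftrightarrow>
     (\<forall>x. f (coset I x) \<in> Z) \<and>
     (\<forall>x y. f (coset I (x + y)) = f (coset I x) + f (coset I y)) \<and>
     (\<forall>c x. f (coset I (sc c x)) = sc c (f (coset I x))) \<and>
     (\<forall>x y. f (coset I (br x y)) = br x (f (coset I y)) - br y (f (coset I x)))"

definition cpa_structure :: "(complex \<Rightarrow> 'a::ab_group_add \<Rightarrow> 'a) \<Rightarrow> ('a \<Rightarrow> 'a \<Rightarrow> 'a) \<Rightarrow> ('a \<Rightarrow> 'a \<Rightarrow> 'a) \<Rightarrow> bool" where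
  "cpa_structure sc br p \<longleftrightarrow> bilinear_map sc p \<and>
     (\<forall>x y. p x y = p y x) \<and>
     (\<forall>x y z. p (br x y) z = p x (p y z) - p y (p x z)) \<and>
     (\<forall>x y z. p x (br y z) = br (p x y) z + br y (p x z))"

definition nil_inner :: "(complex \<Rightarrow> 'a::ab_group_add \<Rightarrow> 'a) \<Rightarrow> ('a \<Rightarrow> 'a \<Rightarrow> 'a) \<Rightarrow> ('a \<Rightarrow> 'a \<Rightarrow> 'a) \<Rightarrow> bool" where
  "nil_inner sc br p \<longleftrightarrow> (\<exists>\<phi>. Vector_Spaces.linear sc sc \<phi> \<and>
     (\<forall>x y. \<phi> (br x y) = br (\<phi> x) (\<phi> y)) \<and>
     (\<exists>n. \<forall>x. (\<phi> ^^ n) x = 0) \<and>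
     (\<forall>x y. p x y = br (\<phi> x) y))"

definition associative_product :: "('a \<Rightarrow> 'a \<Rightarrow> 'a) \<Rightarrow> bool" where
  "associative_product p \<longleftrightarrow> (\<forall>x y z. p (p x y) z = p x (p y z))"

end

theory Submission
  imports Defs
begin

theorem proposition4p1:
  fixes sc :: "complex \<Rightarrow> 'a::ab_group_add \<Rightarrow> 'a"
    and br :: "'a \<Rightarrow> 'a \<Rightarrow> 'a"
    and I :: "'a set"
    and f :: "'a set \<Rightarrow> 'a"
  assumes "lie_algebra sc br"
    and "fin_dim sc"
    and "lie_ideal sc br I"
    and "abelian_quotient br I"
    and "cocycle1 sc br I (center_of br I) f"
  shows "cpa_structure sc br (\<lambda>x y. br (f (coset I x)) y)
       \<and> nil_inner sc br (\<lambda>x y. br (f (coset I x)) y)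
       \<and> associative_product (\<lambda>x y. br (f (coset I x)) y)"
proof -
  define F where "F x = f (coset I x)" for x
  have vs: "vector_space sc" and bil: "bilinear_map sc br" and alt: "\<And>x. br x x = 0"
    and jac: "\<And>x y z. br x (br y z) + br y (br z x) + br z (br x y) = 0"
    using assms(1) unfolding lie_algebra_def by auto
  have linr: "\<And>x. Vector_Spaces.linear sc sc (br x)" and linl: "\<And>y. Vector_Spaces.linear sc sc (\<lambda>x. br x y)"
    using bil unfolding bilinear_map_def by auto
  have addr: "br x (y + z) = br x y + br x z" for x y z using linr[of x] unfolding Vector_Spaces.linear_iff by blast
  have addl: "br (x + y) z = br x z + br y z" for x y z using linl[of z] unfolding Vector_Spaces.linear_iff by blast
  have z0r: "\<And>x. br x 0 = 0" by (metis add_cancel_right_right addr)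
  have z0l: "\<And>x. br 0 x = 0" by (metis add_cancel_right_right addl)
  have anti: "\<And>x y. br x y = - br y x"
  proof -
    fix x y
    have "0 = br (x+y) (x+y)" using alt by simp
    also have "\<dots> = (br x x + br y x) + (br x y + br y y)" by (simp only: addl addr)
    also have "\<dots> = br x y + br y x" by (simp add: alt)
    finally have "br x y + br y x = 0" by simp
    then show "br x y = - br y x" by (simp add: eq_neg_iff_add_eq_0)
  qed
  have negr: "br x (- y) = - br x y" for x y
  proof -
    have "br x y + br x (-y) = 0" using addr[of x y "-y"] z0r by simp
    then show ?thesis by (simp add: eq_neg_iff_add_eq_0 add.commute)
  qed
  have sub: "module.subspace sc I" and idl: "\<And>x i. i \<in> I \<Longrightarrow> br x i \<in> I"
    using assms(3) unfolding lie_ideal_def by auto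
  have mod: "module sc" using vs module_iff_vector_space by blast
  have I0: "0 \<in> I" and Iadd: "\<And>x y. x \<in> I \<Longrightarrow> y \<in> I \<Longrightarrow> x + y \<in> I"
    and Isc: "\<And>c x. x \<in> I \<Longrightarrow> sc c x \<in> I"
    using sub unfolding module.subspace_def[OF mod] by auto
  have Ineg: "\<And>x. x \<in> I \<Longrightarrow> - x \<in> I"
  proof -
    fix x assume "x \<in> I"
    then have "sc (-1) x \<in> I" by (rule Isc)
    moreover have "sc (-1) x = - x"
      using module.scale_minus_left[OF mod, of 1 x] module.scale_one[OF mod, of x] by simp
    ultimately show "- x \<in> I" by simp
  qed
  have cosI: "coset I i = coset I 0" if "i \<in> I" for i
  proof
    show "coset I i \<subseteq> coset I 0" unfolding coset_def using Iadd that by auto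
    show "coset I 0 \<subseteq> coset I i" unfolding coset_def
    proof
      fix y assume "y \<in> (+) 0 ` I"
      then have y: "y \<in> I" by auto
      have "y = i + (y + - i)" by simp
      moreover have "y + - i \<in> I" using Iadd Ineg y that by blast
      ultimately show "y \<in> (+) i ` I" by blast
    qed
  qed
  have brI: "br x y \<in> I" for x y
  proof -
    have "br x y + 0 \<in> coset I (br x y)" unfolding coset_def using I0 by blast
    then show ?thesis using assms(4) unfolding abelian_quotient_def coset_def by auto
  qed
  have cf: "\<And>x. F x \<in> center_of br I" and Fadd: "\<And>x y. F (x+y) = F x + F y"
    and Fsc: "\<And>c x. F (sc c x) = sc c (F x)"
    and Fbr: "\<And>x y. F (br x y) = br x (F y) - br y (F x)"
    using assms(5) unfolding cocycle1_def F_def by auto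
  have FI: "\<And>x. F x \<in> I" and Fc: "\<And>x i. i \<in> I \<Longrightarrow> br i (F x) = 0"
    using cf unfolding center_of_def by auto
  have F0: "F 0 = 0" using Fadd[of 0 0] by simp
  have FI0: "F i = 0" if "i \<in> I" for i using cosI[OF that] F0 unfolding F_def by simp
  have Fbr0: "\<And>x y. F (br x y) = 0" using FI0 brI by blast
  have FF: "\<And>x. F (F x) = 0" using FI0 FI by blast
  have sym: "br x (F y) = br y (F x)" for x y using Fbr[of x y] Fbr0[of x y] by simp
  have Fci: "br (F x) i = 0" if "i \<in> I" for x i using anti[of "F x" i] Fc[OF that] by simp
  have linF: "Vector_Spaces.linear sc sc F" unfolding Vector_Spaces.linear_iff using vs Fadd Fsc by blast
  have comm: "br (F x) y = br (F y) x" for x y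
    using anti[of "F x" y] sym[of y x] anti[of x "F y"] by simp
  have der: "br (F x) (br y z) = br (br (F x) y) z + br y (br (F x) z)" for x y z
  proof -
    have "br (F x) (br y z) + br y (br z (F x)) + br z (br (F x) y) = 0" by (rule jac)
    then have "br (F x) (br y z) - br y (br (F x) z) - br (br (F x) y) z = 0"
      using anti[of z "F x"] anti[of z "br (F x) y"] negr[of y "br (F x) z"] by (simp add: algebra_simps)
    then show ?thesis by (simp add: algebra_simps)
  qed
  have cpa: "cpa_structure sc br (\<lambda>x y. br (f (coset I x)) y)"
    unfolding cpa_structure_def F_def[symmetric]
  proof (intro conjI allI)
    show "bilinear_map sc (\<lambda>x. br (F x))"
      unfolding bilinear_map_def
    proof (intro conjI allI)
      fix x show "Vector_Spaces.linear sc sc (br (F x))" by (rule linr)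
    next
      fix y show "Vector_Spaces.linear sc sc (\<lambda>x. br (F x) y)"
        using Vector_Spaces.linear_compose[OF linF linl[of y]] by (simp add: o_def)
    qed
  next
    fix x y show "br (F x) y = br (F y) x" by (rule comm)
  next
    fix x y z show "br (F (br x y)) z = br (F x) (br (F y) z) - br (F y) (br (F x) z)"
      using Fbr0 z0l Fci brI by simp
  next
    fix x y z show "br (F x) (br y z) = br (br (F x) y) z + br y (br (F x) z)" by (rule der)
  qed
  have nil: "nil_inner sc br (\<lambda>x y. br (f (coset I x)) y)"
    unfolding nil_inner_def F_def[symmetric]
  proof (intro exI conjI allI)
    show "Vector_Spaces.linear sc sc F" by (rule linF)
    fix x y show "F (br x y) = br (F x) (F y)" using Fbr0 Fc FI by simp
  next
    fix x show "(F ^^ 2) x = 0" using FF by (simp add: numeral_2_eq_2)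
  next
    fix x y show "br (F x) y = br (F x) y" ..
  qed
  have ass: "associative_product (\<lambda>x y. br (f (coset I x)) y)"
    unfolding associative_product_def F_def[symmetric]
    using Fbr0 z0l Fci brI by simp
  show ?thesis using cpa nil ass by blast
qed

end
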